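(* Let $L$ be a finite graded atomic lattice with a sheaf $F$ of finite-dimensional vector spaces and let $\widetilde L$ be its Boolean cover with induced sheaf $F$. Then $$\chi\,\mathrm{HC}_*(\widetilde L;F)=\chi'_{(L,F)}(1)=\sum_{x\in L}\mu_L(\mathbf{0},x)\dim F(x),$$ where $\chi'_{(L,F)}$ is the derivative of $\chi_{(L,F)}(t)=\sum_{x\in L}\mu_L(\mathbf{0},x)t^{\dim F(x)}$.
   Context: Graded atomic lattice: finite lattice with minimum $\mathbf{0}$ and rank function ($rk(\mathbf{0})=0$) in which every element is a join of atoms (rank-$1$ elements). Möbius function: $\mu_L(x,x)=1$, $\mu_L(x,y)=-\sum_{x\le z<y}\mu_L(x,z)$. A sheaf assigns a vector space $F(x)$ to each element and a linear map $F^y_x:F(y)\to F(x)$ for $x\le y$, functorially. $\chi\,\mathrm{HC}_*=\sum_n(-1)^n\dim\mathrm{HC}_n$. Boolean cover: $\widetilde L$ is the lattice of subsets of the atoms of $L$, $f(S)=$ join of $S$ in $L$, induced sheaf $F(S)=F(f(S))$ with maps $F^{f(T)}_{f(S)}$. $\mathrm{HC}_*$ of a Boolean lattice of subsets of $\{a_1,\dots,a_n\}$ with sheaf $G$: homology of $C_k=\bigoplus_{|x|=k}G(x)$, $d=\sum\varepsilon^x_yG^x_y$ over $y\subset x$, $|y|=|x|-1$, $\varepsilon^x_y=(-1)^{j-1}$ when $x=\{a_{i_1},\dots,a_{i_k}\}$ ($i_1<\cdots<i_k$), $y=x\setminus\{a_{i_j}\}$. *)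

theory Defs
  imports Main "HOL-Library.Function_Algebras" "HOL-Computational_Algebra.Polynomial"
begin

function mobius :: "'l::{finite,order} \<Rightarrow> 'l \<Rightarrow> int" where
  "mobius x y = (if x = y then 1 else if x \<le> y
      then - (\<Sum>z\<in>{z. x \<le> z \<and> z < y}. mobius x z) else 0)"
  by auto
termination
proof (relation "measure (\<lambda>(x, y). card {w. w < y})")
  show "wf (measure (\<lambda>(x, y). card {w. w < y}))" by simp
next
  fix x y z :: "'a::{finite,order}"
  assume "z \<in> {z. x \<le> z \<and> z < y}"
  then have zy: "z < y" by simp
  have "{w. w < z} \<subset> {w. w < y}"
    using zy less_trans less_irrefl by blast
  then have "card {w. w < z} < card {w. w < y}"
    by (intro psubset_card_mono) auto
  then show "((x, z), x, y) \<in> measure (\<lambda>(x, y). card {w. w < y})" by simp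
qed

declare mobius.simps [simp del]

definition covers :: "'l::order \<Rightarrow> 'l \<Rightarrow> bool" where
  "covers x y \<longleftrightarrow> x < y \<and> \<not> (\<exists>z. x < z \<and> z < y)"

definition graded_by :: "('l::complete_lattice \<Rightarrow> nat) \<Rightarrow> bool" where
  "graded_by rk \<longleftrightarrow> rk bot = 0 \<and> (\<forall>x y. covers x y \<longrightarrow> rk y = rk x + 1)"

definition atoms_of :: "('l \<Rightarrow> nat) \<Rightarrow> 'l set" where
  "atoms_of rk = {a. rk a = 1}"

definition atomic_wrt :: "('l::complete_lattice \<Rightarrow> nat) \<Rightarrow> bool" where
  "atomic_wrt rk \<longleftrightarrow> (\<forall>x. \<exists>S \<subseteq> atoms_of rk. x = Sup S)"

definition lin_on :: "('k \<Rightarrow> 'v \<Rightarrow> 'v) \<Rightarrow> 'v set \<Rightarrow> ('v::ab_group_add \<Rightarrow> 'v) \<Rightarrow> bool" where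
  "lin_on scale V f \<longleftrightarrow>
     (\<forall>u\<in>V. \<forall>v\<in>V. f (u + v) = f u + f v) \<and> (\<forall>c. \<forall>u\<in>V. f (scale c u) = scale c (f u))"

definition is_sheaf ::
  "('k::field \<Rightarrow> 'v::ab_group_add \<Rightarrow> 'v) \<Rightarrow> ('l::order \<Rightarrow> 'v set) \<Rightarrow> ('l \<Rightarrow> 'l \<Rightarrow> 'v \<Rightarrow> 'v) \<Rightarrow> bool" where
  "is_sheaf scale F \<phi> \<longleftrightarrow>
     (\<forall>x. module.subspace scale (F x) \<and> (\<exists>B. finite B \<and> B \<subseteq> F x \<and> F x \<subseteq> module.span scale B)) \<and>
     (\<forall>x y. x \<le> y \<longrightarrow> lin_on scale (F y) (\<phi> y x) \<and> \<phi> y x ` F y \<subseteq> F x) \<and>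
     (\<forall>x. \<forall>v\<in>F x. \<phi> x x v = v) \<and>
     (\<forall>x y z. x \<le> y \<longrightarrow> y \<le> z \<longrightarrow> (\<forall>v\<in>F z. \<phi> y x (\<phi> z y v) = \<phi> z x v))"

(* Boolean cover: chains C_k = direct sum over k-subsets S of the atoms of F(join S);
   an element of C_k is a function from subsets of atoms to vectors, supported on k-subsets. *)
definition bchain :: "'l set \<Rightarrow> ('l::complete_lattice \<Rightarrow> 'v set) \<Rightarrow> nat \<Rightarrow> ('l set \<Rightarrow> 'v::zero) set" where
  "bchain A F k = {c. \<forall>S. c S \<in> (if S \<subseteq> A \<and> card S = k then F (Sup S) else {0})}"

(* sign (-1)^(j-1), j = position of atom a in the ordered set x (order given by ord) *)
definition bsign :: "('l \<Rightarrow> nat) \<Rightarrow> 'l set \<Rightarrow> 'l \<Rightarrow> nat" where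
  "bsign ord x a = card {b\<in>x. ord b < ord a}"

definition bdiff ::
  "('k::field \<Rightarrow> 'v::ab_group_add \<Rightarrow> 'v) \<Rightarrow> 'l set \<Rightarrow> ('l \<Rightarrow> nat) \<Rightarrow> ('l::complete_lattice \<Rightarrow> 'l \<Rightarrow> 'v \<Rightarrow> 'v)
     \<Rightarrow> nat \<Rightarrow> ('l set \<Rightarrow> 'v) \<Rightarrow> ('l set \<Rightarrow> 'v)" where
  "bdiff scale A ord \<phi> k c = (\<lambda>T.
     if T \<subseteq> A \<and> card T + 1 = k then
       (\<Sum>a\<in>A - T. scale ((-1) ^ bsign ord (insert a T) a)
                        (\<phi> (Sup (insert a T)) (Sup T) (c (insert a T))))
     else 0)"

definition cscale :: "('k \<Rightarrow> 'v \<Rightarrow> 'v) \<Rightarrow> 'k \<Rightarrow> ('l set \<Rightarrow> 'v) \<Rightarrow> ('l set \<Rightarrow> 'v)" where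
  "cscale scale c f = (\<lambda>S. scale c (f S))"

definition bcycles where
  "bcycles scale A ord F \<phi> k = {c \<in> bchain A F k. k = 0 \<or> bdiff scale A ord \<phi> k c = (\<lambda>_. 0)}"

definition bbounds where
  "bbounds scale A ord F \<phi> k = bdiff scale A ord \<phi> (Suc k) ` bchain A F (Suc k)"

definition HC_dim where
  "HC_dim scale A ord F \<phi> k =
     int (vector_space.dim (cscale scale) (bcycles scale A ord F \<phi> k))
   - int (vector_space.dim (cscale scale) (bbounds scale A ord F \<phi> k))"

(* Euler characteristic sum_n (-1)^n dim HC_n (HC_n = 0 for n > |A|) *)
definition euler_HC where
  "euler_HC scale A ord F \<phi> = (\<Sum>n\<le>card A. (-1) ^ n * HC_dim scale A ord F \<phi> n)"

definition chi_poly :: "('k::field \<Rightarrow> 'v::ab_group_add \<Rightarrow> 'v) \<Rightarrow> ('l::{finite,complete_lattice} \<Rightarrow> 'v set) \<Rightarrow> int poly" where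
  "chi_poly scale F = (\<Sum>x\<in>UNIV. monom (mobius bot x) (vector_space.dim scale (F x)))"

end

theory Submission
  imports Defs
begin


lemma vs_cscale:
  assumes "vector_space scale"
  shows "vector_space (cscale scale)"
proof -
  interpret V: vector_space scale by fact
  show ?thesis
    by unfold_locales (auto simp: cscale_def fun_eq_iff V.scale_right_distrib V.scale_left_distrib)
qed

context vector_space_pair begin

lemma f_sum_on:
  fixes f :: "'b \<Rightarrow> 'c"
  assumes "vs1.subspace V" "\<forall>x\<in>V. \<forall>y\<in>V. f (x+y) = f x + f y"
    and "finite S" "\<And>i. i \<in> S \<Longrightarrow> h i \<in> V"
  shows "f (\<Sum>i\<in>S. h i) = (\<Sum>i\<in>S. f (h i))"
  using assms(3,4)
proof (induction S rule: finite_induct)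
  case empty
  have z: "0 \<in> V" by (rule vs1.subspace_0[OF assms(1)])
  have "f (0 + 0) = f 0 + f 0" using assms(2) z by blast
  then have "f 0 = 0" by simp
  then show ?case by simp
next
  case (insert x F)
  have "sum h F \<in> V" using insert by (intro vs1.subspace_sum[OF assms(1)]) auto
  then show ?case using insert assms(2) by simp
qed

lemma rank_nullity:
  assumes V: "vs1.subspace V"
    and add: "\<forall>x\<in>V. \<forall>y\<in>V. f (x+y) = f x + f y"
    and sc: "\<forall>c. \<forall>x\<in>V. f (c *a x) = c *b f x"
    and BK: "finite BK" "vs1.independent BK" "BK \<subseteq> {v\<in>V. f v = 0}" "{v\<in>V. f v = 0} \<subseteq> vs1.span BK"
    and BI: "finite BI" "vs2.independent BI" "BI \<subseteq> f ` V" "f ` V \<subseteq> vs2.span BI"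
  shows "vs1.dim V = card BK + card BI \<and> (\<exists>B. finite B \<and> V \<subseteq> vs1.span B)"
proof -
  have "\<forall>w\<in>BI. \<exists>v\<in>V. f v = w" using BI(3) by blast
  then have "\<exists>g. \<forall>w\<in>BI. g w \<in> V \<and> f (g w) = w" by (intro bchoice) blast
  then obtain g where g: "\<And>w. w \<in> BI \<Longrightarrow> g w \<in> V \<and> f (g w) = w" by blast
  define D where "D = g ` BI"
  have injg: "inj_on g BI"
  proof (rule inj_onI)
    fix x y assume "x \<in> BI" "y \<in> BI" "g x = g y"
    then show "x = y" using g[of x] g[of y] by metis
  qed
  have cardD: "card D = card BI" using injg D_def card_image by blast
  have finD: "finite D" using BI(1) D_def by simp
  have DV: "D \<subseteq> V" using g D_def by auto
  have BKV: "BK \<subseteq> V" using BK(3) by auto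
  have disj: "BK \<inter> D = {}"
  proof -
    have "0 \<notin> BI" using BI(2) vs2.dependent_zero by blast
    show ?thesis
    proof (rule ccontr)
      assume "BK \<inter> D \<noteq> {}"
      then obtain w where w: "w \<in> BI" "g w \<in> BK" unfolding D_def by blast
      then have "f (g w) = 0" using BK(3) by blast
      then have "w = 0" using g[OF w(1)] by simp
      then show False using w(1) \<open>0 \<notin> BI\<close> by simp
    qed
  qed
  have fsum: "\<And>S h. finite S \<Longrightarrow> (\<And>i. i \<in> S \<Longrightarrow> h i \<in> V) \<Longrightarrow> f (\<Sum>i\<in>S. h i) = (\<Sum>i\<in>S. f (h i))"
    using f_sum_on[OF V add] by blast
  define C where "C = BK \<union> D"
  have finC: "finite C" using C_def finD BK(1) by simp
  have CV: "C \<subseteq> V" using C_def DV BKV by auto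
  have span: "V \<subseteq> vs1.span C"
  proof
    fix v assume v: "v \<in> V"
    have "f v \<in> vs2.span BI" using v BI(4) by auto
    then obtain a where a: "f v = (\<Sum>w\<in>BI. a w *b w)" using vs2.span_finite[OF BI(1)] by auto
    define u where "u = (\<Sum>w\<in>BI. a w *a g w)"
    have uV: "u \<in> V" unfolding u_def
      by (intro vs1.subspace_sum[OF V]) (use g V in \<open>auto simp: vs1.subspace_def\<close>)
    have fu: "f u = f v" unfolding u_def a
      by (subst fsum[OF BI(1)]) (use g V sc in \<open>auto simp: vs1.subspace_def\<close>)
    have vu: "v - u \<in> V" by (rule vs1.subspace_diff[OF V v uV])
    have "f ((v - u) + u) = f (v - u) + f u" using add vu uV by blast
    then have h: "f v = f (v - u) + f u" by simp
    have "f v = f (v - u) + f v" using h fu by simp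
    then have "f (v - u) = 0" by simp
    then have "v - u \<in> vs1.span BK" using vu BK(4) by auto
    then have 1: "v - u \<in> vs1.span C" using C_def vs1.span_mono by blast
    have "u \<in> vs1.span D" unfolding u_def D_def
      by (intro vs1.span_sum vs1.span_scale vs1.span_base) auto
    then have 2: "u \<in> vs1.span C" using C_def vs1.span_mono by blast
    have "(v - u) + u \<in> vs1.span C" by (rule vs1.span_add[OF 1 2])
    then show "v \<in> vs1.span C" by simp
  qed
  have indep0: "\<forall>c. (\<Sum>v\<in>C. c v *a v) = 0 \<longrightarrow> (\<forall>v\<in>C. c v = 0)"
  proof (intro allI impI ballI)
    fix c v assume 0: "(\<Sum>v\<in>C. c v *a v) = 0" and vC: "v \<in> C"
    have split: "(\<Sum>v\<in>C. c v *a v) = (\<Sum>v\<in>BK. c v *a v) + (\<Sum>v\<in>D. c v *a v)"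
      unfolding C_def using disj finD BK(1) by (simp add: sum.union_disjoint)
    have s1V: "(\<Sum>v\<in>BK. c v *a v) \<in> V" using BKV V
      by (intro vs1.subspace_sum[OF V]) (auto simp: vs1.subspace_def)
    have s2V: "(\<Sum>v\<in>D. c v *a v) \<in> V" using DV V
      by (intro vs1.subspace_sum[OF V]) (auto simp: vs1.subspace_def)
    have f1: "f (\<Sum>v\<in>BK. c v *a v) = 0"
    proof -
      have "f (\<Sum>v\<in>BK. c v *a v) = (\<Sum>v\<in>BK. f (c v *a v))"
        using fsum[OF BK(1), of "\<lambda>v. c v *a v"] BKV vs1.subspace_scale[OF V] by blast
      also have "\<dots> = (\<Sum>v\<in>BK. c v *b f v)" using BKV sc by (intro sum.cong) auto
      also have "\<dots> = 0" using BK(3) by (intro sum.neutral) auto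
      finally show ?thesis .
    qed
    have f0: "f 0 = 0"
    proof -
      have z: "0 \<in> V" by (rule vs1.subspace_0[OF V])
      have "f (0 + 0) = f 0 + f 0" using add z by blast
      then show "f 0 = 0" by simp
    qed
    have fC: "f (\<Sum>v\<in>C. c v *a v) = f (\<Sum>v\<in>BK. c v *a v) + f (\<Sum>v\<in>D. c v *a v)"
      unfolding split using add s1V s2V by blast
    have h0: "f (\<Sum>v\<in>C. c v *a v) = 0" unfolding 0 by (rule f0)
    have "f (\<Sum>v\<in>C. c v *a v) = f (\<Sum>v\<in>D. c v *a v)" using fC f1 by simp
    then have "f (\<Sum>v\<in>D. c v *a v) = 0" using h0 by simp
    moreover have "f (\<Sum>v\<in>D. c v *a v) = (\<Sum>w\<in>BI. c (g w) *b w)"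
    proof -
      have "f (\<Sum>v\<in>D. c v *a v) = (\<Sum>v\<in>D. f (c v *a v))"
        using fsum[OF finD, of "\<lambda>v. c v *a v"] DV vs1.subspace_scale[OF V] by blast
      also have "\<dots> = (\<Sum>w\<in>BI. f (c (g w) *a g w))"
        unfolding D_def by (rule sum.reindex[OF injg, unfolded comp_def])
      also have "\<dots> = (\<Sum>w\<in>BI. c (g w) *b w)"
        using g sc by (intro sum.cong) auto
      finally show ?thesis .
    qed
    ultimately have cD: "\<forall>w\<in>BI. c (g w) = 0"
      using vs2.independentD[OF BI(2) BI(1) subset_refl] by auto
    then have "(\<Sum>v\<in>D. c v *a v) = 0" unfolding D_def by (intro sum.neutral) auto
    then have "(\<Sum>v\<in>BK. c v *a v) = 0" using 0 split by simp
    then have "\<forall>v\<in>BK. c v = 0" using vs1.independentD[OF BK(2) BK(1) subset_refl] by blast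
    then show "c v = 0" using vC cD C_def D_def by auto
  qed
  have indep: "vs1.independent C"
  proof
    assume "vs1.dependent C"
    then obtain u v where "v \<in> C" "u v \<noteq> 0" "(\<Sum>v\<in>C. u v *a v) = 0"
      unfolding vs1.dependent_finite[OF finC] by blast
    then show False using indep0 by blast
  qed
  have "card C = vs1.dim V" using vs1.basis_card_eq_dim[OF CV span indep] .
  moreover have "card C = card BK + card BI"
    unfolding C_def using card_Un_disjoint[OF BK(1) finD disj] cardD by simp
  ultimately show ?thesis using finC span by auto
qed

end

context vector_space begin
lemma fin_basis:
  assumes "finite B0" "W \<subseteq> span B0"
  obtains B where "finite B" "independent B" "B \<subseteq> W" "W \<subseteq> span B" "card B = dim W"
proof -
  obtain B where B: "B \<subseteq> W" "independent B" "W \<subseteq> span B" "card B = dim W"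
    using basis_exists by blast
  have "finite B" using independent_span_bound[OF assms(1) B(2)] B(1) assms(2) by blast
  then show ?thesis using that B by blast
qed
end

definition pspace :: "'i set \<Rightarrow> ('i \<Rightarrow> 'v set) \<Rightarrow> ('i \<Rightarrow> 'v::zero) set" where
  "pspace I V = {c. \<forall>i. c i \<in> (if i \<in> I then V i else {0})}"

lemma pspace_subspace:
  assumes "vector_space scale" "\<forall>i\<in>I. module.subspace scale (V i)"
  shows "module.subspace (cscale scale) (pspace I V)"
proof -
  interpret V: vector_space scale by fact
  interpret C: vector_space "cscale scale" by (rule vs_cscale[OF assms(1)])
  show ?thesis unfolding C.subspace_def pspace_def
    using assms(2) by (auto simp: cscale_def V.subspace_def)
qed

lemma prod_dim:
  assumes "vector_space scale" "finite I"
    and "\<forall>i\<in>I. module.subspace scale (V i) \<and> (\<exists>B. finite B \<and> V i \<subseteq> module.span scale B)"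
  shows "vector_space.dim (cscale scale) (pspace I V) = (\<Sum>i\<in>I. vector_space.dim scale (V i))
     \<and> (\<exists>B. finite B \<and> pspace I V \<subseteq> module.span (cscale scale) B)"
  using assms(2,3)
proof (induction I rule: finite_induct)
  interpret V: vector_space scale by fact
  interpret C: vector_space "cscale scale" by (rule vs_cscale[OF assms(1)])
  case empty
  have "pspace {} V = {0}" unfolding pspace_def by auto
  moreover have "C.dim {0} = 0"
    using C.basis_card_eq_dim[of "{}" "{0}"] C.span_empty C.independent_empty by simp
  ultimately show ?case by (auto intro!: exI[of _ "{}"] simp: C.span_empty)
next
  interpret V: vector_space scale by fact
  interpret C: vector_space "cscale scale" by (rule vs_cscale[OF assms(1)])
  interpret CV: vector_space_pair "cscale scale" scale ..
  case (insert j I)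
  let ?P = "pspace (insert j I) V"
  have IH: "C.dim (pspace I V) = (\<Sum>i\<in>I. V.dim (V i))" "\<exists>B. finite B \<and> pspace I V \<subseteq> C.span B"
    using insert by auto
  have sub: "C.subspace ?P" using pspace_subspace[OF assms(1)] insert(4) by blast
  have ker: "{c\<in>?P. c j = 0} = pspace I V" unfolding pspace_def using insert(2) insert(4) by (auto simp: V.subspace_def)
  have img: "(\<lambda>c. c j) ` ?P = V j"
  proof
    show "(\<lambda>c. c j) ` ?P \<subseteq> V j" unfolding pspace_def by auto
    show "V j \<subseteq> (\<lambda>c. c j) ` ?P"
    proof
      fix v assume v: "v \<in> V j"
      have "(\<lambda>i. if i = j then v else 0) \<in> ?P"
        unfolding pspace_def using v insert(4) by (auto simp: V.subspace_def)
      then show "v \<in> (\<lambda>c. c j) ` ?P" by (rule rev_image_eqI) simp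
    qed
  qed
  obtain B0 where B0: "finite B0" "pspace I V \<subseteq> C.span B0" using IH(2) by blast
  obtain BK where BK: "finite BK" "C.independent BK" "BK \<subseteq> pspace I V" "pspace I V \<subseteq> C.span BK"
     "card BK = C.dim (pspace I V)"
    using C.fin_basis[OF B0] by blast
  obtain B1 where B1: "finite B1" "V j \<subseteq> V.span B1" using insert(4) by blast
  obtain BI where BI: "finite BI" "V.independent BI" "BI \<subseteq> V j" "V j \<subseteq> V.span BI"
     "card BI = V.dim (V j)"
    using V.fin_basis[OF B1] by blast
  have "C.dim ?P = card BK + card BI \<and> (\<exists>B. finite B \<and> ?P \<subseteq> C.span B)"
    by (rule CV.rank_nullity[OF sub, of "\<lambda>c. c j"])
       (use BK BI ker img in \<open>auto simp: cscale_def\<close>)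
  then show ?case using BK(5) BI(5) IH(1) insert(1,2) by simp
qed



lemma pderiv_sum': "pderiv (sum f A) = (\<Sum>x\<in>A. pderiv (f x))"
  by (induction A rule: infinite_finite_induct) (simp_all add: pderiv_add)

lemma chi_deriv:
  "poly (pderiv (chi_poly scale F)) 1 = (\<Sum>x\<in>UNIV. mobius bot x * int (vector_space.dim scale (F x)))"
  unfolding chi_poly_def pderiv_sum' poly_sum pderiv_monom poly_monom by (simp add: mult.commute)

lemma alt_sum_pow:
  assumes "finite B"
  shows "(\<Sum>S\<in>Pow B. (-1::int) ^ card S) = (if B = {} then 1 else 0)"
  using assms
proof (induction B rule: finite_induct)
  case empty then show ?case by simp
next
  case (insert b B)
  have inj: "inj_on (insert b) (Pow B)" using insert(2) by (auto simp: inj_on_def)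
  have disj: "Pow B \<inter> insert b ` Pow B = {}" using insert(2) by auto
  have "(\<Sum>S\<in>Pow (insert b B). (-1::int) ^ card S)
      = (\<Sum>S\<in>Pow B. (-1::int) ^ card S) + (\<Sum>S\<in>insert b ` Pow B. (-1::int) ^ card S)"
    unfolding Pow_insert using insert(1) disj by (intro sum.union_disjoint) auto
  also have "(\<Sum>S\<in>insert b ` Pow B. (-1::int) ^ card S) = (\<Sum>S\<in>Pow B. (-1::int) ^ card (insert b S))"
    by (rule sum.reindex[OF inj, unfolded comp_def])
  also have "\<dots> = (\<Sum>S\<in>Pow B. - ((-1::int) ^ card S))"
  proof (intro sum.cong refl)
    fix S assume "S \<in> Pow B"
    then have "finite S" "b \<notin> S" using insert(1,2) finite_subset by auto
    then show "(-1::int) ^ card (insert b S) = - ((-1) ^ card S)" by simp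
  qed
  finally show ?case by (simp add: sum_negf)
qed

lemma card_less_mono:
  fixes z y :: "'l::{finite,order}"
  assumes "z < y" shows "card {w. w < z} < card {w. w < y}"
proof -
  have "{w. w < z} \<subset> {w. w < y}" using assms less_trans less_irrefl by blast
  then show ?thesis by (intro psubset_card_mono) auto
qed

lemma mobius_sum:
  fixes x :: "'l::{finite,complete_lattice}"
  shows "(\<Sum>y\<in>{y. y \<le> x}. mobius bot y) = (if x = bot then 1 else 0)"
proof (cases "x = bot")
  case True
  then have "{y. y \<le> x} = {bot}" by (auto simp: bot_unique)
  then show ?thesis using True by (simp add: mobius.simps)
next
  case False
  have m: "mobius bot x = - (\<Sum>z\<in>{z. bot \<le> z \<and> z < x}. mobius bot z)"
    using False by (subst mobius.simps) (simp add: bot_unique)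
  have e: "{y. y \<le> x} = insert x {z. bot \<le> z \<and> z < x}" by auto
  show ?thesis unfolding e using False m by simp
qed

lemma cross_cut:
  fixes A :: "'l::{finite,complete_lattice} set"
  assumes nb: "bot \<notin> A" and at: "\<forall>x. \<exists>S\<subseteq>A. x = Sup S"
  shows "(\<Sum>S\<in>{S. S \<subseteq> A \<and> Sup S = x}. (-1::int) ^ card S) = mobius bot x"
proof -
  define g where "g x = (\<Sum>S\<in>{S. S \<subseteq> A \<and> Sup S = x}. (-1::int) ^ card S)" for x
  have finA: "finite A" by simp
  have gsum: "(\<Sum>y\<in>{y. y \<le> x}. g y) = (if x = bot then 1 else 0)" for x
  proof -
    let ?SS = "{S. S \<subseteq> A \<and> Sup S \<le> x}"
    have "(\<Sum>y\<in>{y. y \<le> x}. g y) = (\<Sum>y\<in>{y. y \<le> x}. \<Sum>S\<in>{S. S \<in> ?SS \<and> Sup S = y}. (-1::int) ^ card S)"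
    proof (intro sum.cong refl)
      fix y assume "y \<in> {y. y \<le> x}"
      then have "{S. S \<in> ?SS \<and> Sup S = y} = {S. S \<subseteq> A \<and> Sup S = y}" by auto
      then show "g y = (\<Sum>S\<in>{S. S \<in> ?SS \<and> Sup S = y}. (-1::int) ^ card S)" unfolding g_def by simp
    qed
    also have "\<dots> = (\<Sum>S\<in>?SS. (-1::int) ^ card S)"
      by (rule sum.group) auto
    also have "{S. S \<subseteq> A \<and> Sup S \<le> x} = Pow {a\<in>A. a \<le> x}" by (auto simp: Sup_le_iff)
    also have "(\<Sum>S\<in>Pow {a\<in>A. a \<le> x}. (-1::int) ^ card S) = (if {a\<in>A. a \<le> x} = {} then 1 else 0)"
      by (rule alt_sum_pow) simp
    also have "({a\<in>A. a \<le> x} = {}) = (x = bot)"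
    proof
      assume e: "{a\<in>A. a \<le> x} = {}"
      obtain S where S: "S \<subseteq> A" "x = Sup S" using at by blast
      have "S = {}" using S e Sup_upper by blast
      then show "x = bot" using S by simp
    next
      assume "x = bot" then show "{a\<in>A. a \<le> x} = {}" using nb by (auto simp: bot_unique)
    qed
    finally show ?thesis .
  qed
  have "g x = mobius bot x"
  proof (induction x rule: measure_induct_rule[of "\<lambda>x. card {w. w < x}"])
    case (less x)
    have e: "{y. y \<le> x} = insert x {y. y < x}" by auto
    have "(\<Sum>y\<in>{y. y < x}. g y) = (\<Sum>y\<in>{y. y < x}. mobius bot y)"
      using less card_less_mono by (intro sum.cong) auto
    moreover have "g x + (\<Sum>y\<in>{y. y < x}. g y) = (if x = bot then 1 else 0)"
      using gsum[of x] unfolding e by simp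
    moreover have "mobius bot x + (\<Sum>y\<in>{y. y < x}. mobius bot y) = (if x = bot then 1 else 0)"
      using mobius_sum[of x] unfolding e by simp
    ultimately show ?case by linarith
  qed
  then show ?thesis unfolding g_def .
qed

lemma telescope:
  fixes z b c :: "nat \<Rightarrow> int"
  assumes "c 0 = z 0" "\<And>n. c (Suc n) = z (Suc n) + b n"
  shows "(\<Sum>n\<le>M. (-1)^n * (z n - b n)) = (\<Sum>n\<le>M. (-1)^n * c n) - (-1)^M * b M"
  by (induction M) (simp_all add: assms algebra_simps)



theorem corollary4:
  fixes scale :: "'k::field \<Rightarrow> 'v::ab_group_add \<Rightarrow> 'v"
    and rk :: "'l::{finite,complete_lattice} \<Rightarrow> nat"
    and F :: "'l \<Rightarrow> 'v set"
    and \<phi> :: "'l \<Rightarrow> 'l \<Rightarrow> 'v \<Rightarrow> 'v"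
    and ord :: "'l \<Rightarrow> nat"
  assumes "vector_space scale"
    and "graded_by rk"
    and "atomic_wrt rk"
    and "is_sheaf scale F \<phi>"
    and "inj_on ord (atoms_of rk)"
  shows "euler_HC scale (atoms_of rk) ord F \<phi> = poly (pderiv (chi_poly scale F)) 1
       \<and> poly (pderiv (chi_poly scale F)) 1 = (\<Sum>x\<in>UNIV. mobius bot x * int (vector_space.dim scale (F x)))"
proof -
  interpret V: vector_space scale by fact
  interpret C: vector_space "cscale scale" by (rule vs_cscale[OF assms(1)])
  interpret CC: vector_space_pair "cscale scale" "cscale scale" ..
  define A where "A = atoms_of rk"
  define N where "N = card A"
  define P where "P n = {S. S \<subseteq> A \<and> card S = n}" for n
  define d where "d = bdiff scale A ord \<phi>"
  have chain: "bchain A F n = pspace (P n) (\<lambda>S. F (Sup S))" for n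
    unfolding bchain_def pspace_def P_def by simp
  note sh = assms(4)[unfolded is_sheaf_def]
  have sh1: "\<forall>x. V.subspace (F x) \<and> (\<exists>B. finite B \<and> B \<subseteq> F x \<and> F x \<subseteq> V.span B)"
    using sh by (rule conjunct1)
  have sh2: "\<forall>x y. x \<le> y \<longrightarrow> lin_on scale (F y) (\<phi> y x) \<and> \<phi> y x ` F y \<subseteq> F x"
    using sh by (elim conjE)
  have Fsub: "V.subspace (F x)" for x using sh1 by simp
  have Ffin: "\<exists>B. finite B \<and> F x \<subseteq> V.span B" for x using sh1 by meson
  have phiadd: "\<phi> y x (u + v) = \<phi> y x u + \<phi> y x v" if "x \<le> y" "u \<in> F y" "v \<in> F y" for x y u v
    using sh2 that unfolding lin_on_def by simp
  have phisc: "\<phi> y x (scale c u) = scale c (\<phi> y x u)" if "x \<le> y" "u \<in> F y" for x y u c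
    using sh2 that unfolding lin_on_def by simp
  have phimap: "\<phi> y x u \<in> F x" if "x \<le> y" "u \<in> F y" for x y u
    using sh2 that by blast
  have pd: "C.dim (bchain A F n) = (\<Sum>S\<in>P n. V.dim (F (Sup S)))
          \<and> (\<exists>B. finite B \<and> bchain A F n \<subseteq> C.span B)" for n
    unfolding chain by (rule prod_dim[OF assms(1)]) (simp_all add: Fsub Ffin)
  have csub: "C.subspace (bchain A F n)" for n
    unfolding chain by (rule pspace_subspace[OF assms(1)]) (simp add: Fsub)
  have memb: "c S \<in> F (Sup S)" if "c \<in> bchain A F k" "S \<subseteq> A" "card S = k" for c S k
  proof -
    have "\<forall>S. c S \<in> (if S \<subseteq> A \<and> card S = k then F (Sup S) else {0})"
      using that(1) unfolding bchain_def by simp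
    from this[rule_format, of S] show ?thesis using that(2,3) by simp
  qed
  have ins: "insert a T \<subseteq> A \<and> card (insert a T) = Suc (card T) \<and> Sup T \<le> Sup (insert a T)"
    if "T \<subseteq> A" "a \<in> A - T" for a T
    using that by (auto intro: Sup_subset_mono)
  have term_in: "scale r (\<phi> (Sup (insert a T)) (Sup T) (c (insert a T))) \<in> F (Sup T)"
    if "c \<in> bchain A F (Suc n)" "T \<subseteq> A" "card T = n" "a \<in> A - T" for c T n a r
  proof -
    have "insert a T \<subseteq> A" "card (insert a T) = Suc n" using ins[OF that(2,4)] that(3) by auto
    then have "c (insert a T) \<in> F (Sup (insert a T))" by (rule memb[OF that(1)])
    then have "\<phi> (Sup (insert a T)) (Sup T) (c (insert a T)) \<in> F (Sup T)"
      using phimap ins[OF that(2,4)] by blast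
    then show ?thesis using V.subspace_scale[OF Fsub] by blast
  qed
  have dmap: "d (Suc n) c \<in> bchain A F n" if c: "c \<in> bchain A F (Suc n)" for c n
    unfolding bchain_def
  proof (intro CollectI allI)
    fix T
    show "d (Suc n) c T \<in> (if T \<subseteq> A \<and> card T = n then F (Sup T) else {0})"
    proof (cases "T \<subseteq> A \<and> card T = n")
      case True
      have "(\<Sum>a\<in>A - T. scale ((-1) ^ bsign ord (insert a T) a)
                        (\<phi> (Sup (insert a T)) (Sup T) (c (insert a T)))) \<in> F (Sup T)"
        by (rule V.subspace_sum[OF Fsub]) (use term_in[OF c] True in blast)
      then show ?thesis unfolding d_def bdiff_def using True by simp
    next
      case False
      then show ?thesis unfolding d_def bdiff_def by auto
    qed
  qed
  have xm: "c (insert a T) \<in> F (Sup (insert a T)) \<and> Sup T \<le> Sup (insert a T)"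
    if "c \<in> bchain A F (Suc n)" "T \<subseteq> A" "card T = n" "a \<in> A - T" for c T n a
  proof -
    have "insert a T \<subseteq> A" "card (insert a T) = Suc n" using ins[OF that(2,4)] that(3) by auto
    then have "c (insert a T) \<in> F (Sup (insert a T))" by (rule memb[OF that(1)])
    then show ?thesis using ins[OF that(2,4)] by blast
  qed
  have dadd: "d (Suc n) (c1 + c2) = d (Suc n) c1 + d (Suc n) c2"
    if c1: "c1 \<in> bchain A F (Suc n)" and c2: "c2 \<in> bchain A F (Suc n)" for c1 c2 n
  proof (rule ext)
    fix T
    show "d (Suc n) (c1 + c2) T = (d (Suc n) c1 + d (Suc n) c2) T"
    proof (cases "T \<subseteq> A \<and> card T = n")
      case True
      have eq: "scale s (\<phi> (Sup (insert a T)) (Sup T) (c1 (insert a T) + c2 (insert a T)))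
         = scale s (\<phi> (Sup (insert a T)) (Sup T) (c1 (insert a T)))
         + scale s (\<phi> (Sup (insert a T)) (Sup T) (c2 (insert a T)))" if "a \<in> A - T" for a s
        using phiadd[of "Sup T" "Sup (insert a T)" "c1 (insert a T)" "c2 (insert a T)"]
          xm[OF c1 _ _ that] xm[OF c2 _ _ that] True V.scale_right_distrib by simp
      show ?thesis unfolding d_def bdiff_def using True by (simp add: eq sum.distrib del: Sup_insert)
    next
      case False
      then have nc: "\<not> (T \<subseteq> A \<and> card T + 1 = Suc n)" by simp
      show ?thesis unfolding d_def bdiff_def plus_fun_apply if_not_P[OF nc] by simp
    qed
  qed
  have dsc: "d (Suc n) (cscale scale r c) = cscale scale r (d (Suc n) c)"
    if c: "c \<in> bchain A F (Suc n)" for c n r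
  proof (rule ext)
    fix T
    show "d (Suc n) (cscale scale r c) T = cscale scale r (d (Suc n) c) T"
    proof (cases "T \<subseteq> A \<and> card T = n")
      case True
      have eq: "scale s (\<phi> (Sup (insert a T)) (Sup T) (scale r (c (insert a T))))
         = scale r (scale s (\<phi> (Sup (insert a T)) (Sup T) (c (insert a T))))" if "a \<in> A - T" for a s
        using phisc[of "Sup T" "Sup (insert a T)" "c (insert a T)" r]
          xm[OF c _ _ that] True by (simp add: mult.commute)
      show ?thesis unfolding d_def bdiff_def cscale_def using True by (simp add: eq V.scale_sum_right del: Sup_insert)
    next
      case False
      then have nc: "\<not> (T \<subseteq> A \<and> card T + 1 = Suc n)" by simp
      show ?thesis unfolding d_def bdiff_def cscale_def if_not_P[OF nc] by simp
    qed
  qed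
  have rn: "C.dim (bchain A F (Suc n)) = C.dim (bcycles scale A ord F \<phi> (Suc n)) + C.dim (bbounds scale A ord F \<phi> n)" for n
  proof -
    let ?V = "bchain A F (Suc n)"
    have ker: "{v \<in> ?V. d (Suc n) v = 0} = bcycles scale A ord F \<phi> (Suc n)"
      unfolding bcycles_def d_def zero_fun_def by simp
    have img: "d (Suc n) ` ?V = bbounds scale A ord F \<phi> n" unfolding bbounds_def d_def ..
    obtain B0 where B0: "finite B0" "?V \<subseteq> C.span B0" using pd by blast
    have "{v \<in> ?V. d (Suc n) v = 0} \<subseteq> C.span B0" using B0 by blast
    then obtain BK where BK: "finite BK" "C.independent BK" "BK \<subseteq> {v \<in> ?V. d (Suc n) v = 0}"
      "{v \<in> ?V. d (Suc n) v = 0} \<subseteq> C.span BK" "card BK = C.dim {v \<in> ?V. d (Suc n) v = 0}"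
      using C.fin_basis[OF B0(1)] by blast
    obtain B1 where B1: "finite B1" "bchain A F n \<subseteq> C.span B1" using pd by blast
    have "d (Suc n) ` ?V \<subseteq> C.span B1" using B1 dmap by blast
    then obtain BI where BI: "finite BI" "C.independent BI" "BI \<subseteq> d (Suc n) ` ?V"
      "d (Suc n) ` ?V \<subseteq> C.span BI" "card BI = C.dim (d (Suc n) ` ?V)"
      using C.fin_basis[OF B1(1)] by blast
    have "C.dim ?V = card BK + card BI \<and> (\<exists>B. finite B \<and> ?V \<subseteq> C.span B)"
      by (rule CC.rank_nullity[OF csub]) (use dadd dsc BK BI in auto)
    then show ?thesis using BK(5) BI(5) ker img by simp
  qed
  have Z0: "bcycles scale A ord F \<phi> 0 = bchain A F 0" unfolding bcycles_def by simp
  have BN: "C.dim (bbounds scale A ord F \<phi> N) = 0"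
  proof -
    have e: "bchain A F (Suc N) = {0}"
    proof
      show "{0} \<subseteq> bchain A F (Suc N)" using C.subspace_0[OF csub] by simp
      show "bchain A F (Suc N) \<subseteq> {0}"
      proof
        fix c assume c: "c \<in> bchain A F (Suc N)"
        have "c S = 0" for S
        proof -
          have "\<forall>S. c S \<in> (if S \<subseteq> A \<and> card S = Suc N then F (Sup S) else {0})"
            using c unfolding bchain_def by simp
          moreover have "\<not> (S \<subseteq> A \<and> card S = Suc N)"
            using card_mono[of A S] unfolding N_def by auto
          ultimately show ?thesis by (metis singletonD)
        qed
        then show "c \<in> {0}" by (simp add: fun_eq_iff)
      qed
    qed
    have z0: "0 \<in> bchain A F (Suc N)" using e by simp
    have "d (Suc N) (0 + 0) = d (Suc N) 0 + d (Suc N) 0" by (rule dadd[OF z0 z0])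
    then have "d (Suc N) 0 = 0" by simp
    then have "bbounds scale A ord F \<phi> N = {0}" unfolding bbounds_def using e by (simp add: d_def)
    then show ?thesis
      using C.basis_card_eq_dim[of "{}" "{0}"] C.span_empty C.independent_empty by simp
  qed
  define z where "z n = int (C.dim (bcycles scale A ord F \<phi> n))" for n
  define b where "b n = int (C.dim (bbounds scale A ord F \<phi> n))" for n
  define cc where "cc n = int (C.dim (bchain A F n))" for n
  define D where "D S = int (V.dim (F (Sup S)))" for S
  have "euler_HC scale A ord F \<phi> = (\<Sum>n\<le>N. (-1)^n * (z n - b n))"
    unfolding euler_HC_def HC_dim_def z_def b_def N_def ..
  also have "\<dots> = (\<Sum>n\<le>N. (-1)^n * cc n) - (-1)^N * b N"
    by (rule telescope) (simp_all add: cc_def z_def b_def Z0 rn)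
  also have "\<dots> = (\<Sum>n\<le>N. (-1)^n * cc n)" using BN b_def by simp
  also have "\<dots> = (\<Sum>n\<le>N. \<Sum>S\<in>{S \<in> Pow A. card S = n}. (-1) ^ card S * D S)"
  proof (intro sum.cong refl)
    fix n
    have "cc n = (\<Sum>S\<in>P n. D S)" unfolding cc_def D_def using pd[of n] by simp
    also have "P n = {S \<in> Pow A. card S = n}" unfolding P_def by auto
    finally show "(-1)^n * cc n = (\<Sum>S\<in>{S \<in> Pow A. card S = n}. (-1) ^ card S * D S)"
      by (simp add: sum_distrib_left)
  qed
  also have "\<dots> = (\<Sum>S\<in>Pow A. (-1) ^ card S * D S)"
    by (rule sum.group) (auto simp: N_def card_mono)
  also have "\<dots> = (\<Sum>x\<in>UNIV. \<Sum>S\<in>{S \<in> Pow A. Sup S = x}. (-1) ^ card S * D S)"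
    by (rule sum.group[symmetric]) auto
  also have "\<dots> = (\<Sum>x\<in>UNIV. mobius bot x * int (V.dim (F x)))"
  proof (intro sum.cong refl)
    fix x
    have "(\<Sum>S\<in>{S \<in> Pow A. Sup S = x}. (-1) ^ card S * D S)
        = (\<Sum>S\<in>{S. S \<subseteq> A \<and> Sup S = x}. (-1::int) ^ card S) * int (V.dim (F x))"
      unfolding sum_distrib_right D_def by (intro sum.cong) auto
    also have "(\<Sum>S\<in>{S. S \<subseteq> A \<and> Sup S = x}. (-1::int) ^ card S) = mobius bot x"
    proof (rule cross_cut)
      show "bot \<notin> A" using assms(2) unfolding A_def atoms_of_def graded_by_def by simp
      show "\<forall>x. \<exists>S\<subseteq>A. x = Sup S" using assms(3) unfolding A_def atomic_wrt_def .
    qed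
    finally show "(\<Sum>S\<in>{S \<in> Pow A. Sup S = x}. (-1) ^ card S * D S) = mobius bot x * int (V.dim (F x))" .
  qed
  finally have e1: "euler_HC scale (atoms_of rk) ord F \<phi> = (\<Sum>x\<in>UNIV. mobius bot x * int (V.dim (F x)))"
    unfolding A_def .
  have e2: "poly (pderiv (chi_poly scale F)) 1 = (\<Sum>x\<in>UNIV. mobius bot x * int (V.dim (F x)))"
    by (rule chi_deriv)
  show ?thesis unfolding e1 e2 by simp
qed

end
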